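(* For $n\ge2$ and all $P,Q\in\Gamma_n$, $D_{J\Delta}(P\|Q)\le \frac23 D_{T\Delta}(P\|Q)$.
   Context: $\Gamma_n=\{P=(p_1,\dots,p_n): p_i>0,\ \sum p_i=1\}$. $\Delta(P\|Q)=\sum_{i=1}^n\frac{(p_i-q_i)^2}{p_i+q_i}$; $J(P\|Q)=\sum_{i=1}^n(p_i-q_i)\ln\frac{p_i}{q_i}$; $T(P\|Q)=\sum_{i=1}^n\frac{p_i+q_i}{2}\ln\frac{p_i+q_i}{2\sqrt{p_iq_i}}$. $D_{J\Delta}=\frac18J-\frac14\Delta$, $D_{T\Delta}=T-\frac14\Delta$. *)

theory Defs
  imports Complex_Main
begin

definition Gamma :: "nat \<Rightarrow> (nat \<Rightarrow> real) set" where
  "Gamma n = {P. (\<forall>i<n. P i > 0) \<and> (\<Sum>i<n. P i) = 1}"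

definition Delta_div :: "nat \<Rightarrow> (nat \<Rightarrow> real) \<Rightarrow> (nat \<Rightarrow> real) \<Rightarrow> real" where
  "Delta_div n P Q = (\<Sum>i<n. (P i - Q i)^2 / (P i + Q i))"

definition J_div :: "nat \<Rightarrow> (nat \<Rightarrow> real) \<Rightarrow> (nat \<Rightarrow> real) \<Rightarrow> real" where
  "J_div n P Q = (\<Sum>i<n. (P i - Q i) * ln (P i / Q i))"

definition T_div :: "nat \<Rightarrow> (nat \<Rightarrow> real) \<Rightarrow> (nat \<Rightarrow> real) \<Rightarrow> real" where
  "T_div n P Q = (\<Sum>i<n. (P i + Q i) / 2 * ln ((P i + Q i) / (2 * sqrt (P i * Q i))))"

definition D_JDelta :: "nat \<Rightarrow> (nat \<Rightarrow> real) \<Rightarrow> (nat \<Rightarrow> real) \<Rightarrow> real" where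
  "D_JDelta n P Q = J_div n P Q / 8 - Delta_div n P Q / 4"

definition D_TDelta :: "nat \<Rightarrow> (nat \<Rightarrow> real) \<Rightarrow> (nat \<Rightarrow> real) \<Rightarrow> real" where
  "D_TDelta n P Q = T_div n P Q - Delta_div n P Q / 4"

end

theory Submission
  imports Defs
begin

definition FF :: "real \<Rightarrow> real" where
  "FF x = 8*(x+1)*(ln(x+1) - ln 2) - (7*x+1)*ln x + 2*(x-1)^2/(x+1)"
definition FF1 :: "real \<Rightarrow> real" where
  "FF1 x = 8*(ln(x+1) - ln 2) - 7*ln x + 1 - 1/x + 2*(x-1)*(x+3)/(x+1)^2"
definition FF2 :: "real \<Rightarrow> real" where
  "FF2 x = 8/(x+1) - 7/x + 1/x^2 + 16/(x+1)^3"
lemma FF2_nonneg: assumes "x > 0" shows "FF2 x \<ge> 0"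
proof -
  have h: "x+1 \<noteq> 0" "x \<noteq> 0" using assms by auto
  have "FF2 x = (x-1)^4 / (x^2*(x+1)^3)"
    using h unfolding FF2_def by (simp add: divide_simps) algebra
  also have "\<dots> \<ge> 0" using assms by simp
  finally show ?thesis .
qed

lemma FF1_deriv: assumes "x > 0" shows "(FF1 has_real_derivative FF2 x) (at x)"
proof -
  have h: "x+1 \<noteq> 0" "x \<noteq> 0" "x+1>0" "x>0" using assms by auto
  show ?thesis unfolding FF1_def[abs_def]
    apply (rule DERIV_cong)
    apply (intro derivative_eq_intros refl)
    using h apply simp_all
    unfolding FF2_def using h by (simp add: divide_simps) algebra
qed
lemma FF_deriv: assumes "x > 0" shows "(FF has_real_derivative FF1 x) (at x)"
proof -
  have h: "x+1 \<noteq> 0" "x \<noteq> 0" "x+1>0" "x>0" using assms by auto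
  show ?thesis unfolding FF_def[abs_def]
    apply (rule DERIV_cong)
    apply (intro derivative_eq_intros refl)
    using h apply simp_all
    unfolding FF1_def using h by (simp add: divide_simps) algebra
qed

lemma FF1_1: "FF1 1 = 0" by (simp add: FF1_def)
lemma FF_1: "FF 1 = 0" by (simp add: FF_def)

lemma FF1_ge: assumes "x \<ge> 1" shows "FF1 x \<ge> 0"
proof -
  have "FF1 1 \<le> FF1 x"
    apply (rule DERIV_nonneg_imp_nondecreasing[OF assms])
    using FF1_deriv FF2_nonneg by (metis less_le_trans zero_less_one)
  thus ?thesis by (simp add: FF1_1)
qed

lemma FF1_le: assumes "x > 0" "x \<le> 1" shows "FF1 x \<le> 0"
proof -
  have "FF1 x \<le> FF1 1"
    apply (rule DERIV_nonneg_imp_nondecreasing[OF assms(2)])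
    using FF1_deriv FF2_nonneg assms(1) by (metis less_le_trans)
  thus ?thesis by (simp add: FF1_1)
qed

lemma FF_nonneg: assumes "x > 0" shows "FF x \<ge> 0"
proof (cases "x \<ge> 1")
  case True
  have "FF 1 \<le> FF x"
    apply (rule DERIV_nonneg_imp_nondecreasing[OF True])
    using FF_deriv FF1_ge by (metis less_le_trans zero_less_one)
  thus ?thesis by (simp add: FF_1)
next
  case False
  have "FF 1 \<le> FF x"
    apply (rule DERIV_nonpos_imp_nonincreasing[of x])
    using False apply simp
    using FF_deriv FF1_le assms by (metis less_le_trans)
  thus ?thesis by (simp add: FF_1)
qed

lemma pointwise:
  fixes p q :: real assumes p: "p > 0" and q: "q > 0"
  shows "(p - q) * ln (p / q) / 8 - (p - q)^2 / (p + q) / 4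
     \<le> 2/3 * ((p + q) / 2 * ln ((p + q) / (2 * sqrt (p * q))) - (p - q)^2 / (p + q) / 4)"
proof -
  define x where "x = p / q"
  have x: "x > 0" using p q by (simp add: x_def)
  have px: "p = x * q" using q by (simp add: x_def)
  have sq: "sqrt (p*q) = sqrt x * q" using q x by (simp add: px real_sqrt_mult)
  have l1: "ln ((p + q) / (2 * sqrt (p * q))) = (ln (x+1) - ln 2) - ln x / 2"
  proof -
    have "(p + q) / (2 * sqrt (p * q)) = ((x+1)/2) / sqrt x"
      unfolding sq using q x by (simp add: px field_simps)
    hence "ln ((p + q) / (2 * sqrt (p * q))) = ln ((x+1)/2) - ln (sqrt x)"
      using x by (simp only: ln_div) simp
    moreover have "ln ((x+1)/2) = ln (x+1) - ln 2" using x by (simp add: ln_div)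
    ultimately have "ln ((p + q) / (2 * sqrt (p * q))) = (ln (x+1) - ln 2) - ln (sqrt x)" by simp
    thus ?thesis using x by (simp add: ln_sqrt)
  qed
  have "0 \<le> q * FF x / 24" using FF_nonneg[OF x] q by simp
  also have "q * FF x / 24 = 2/3 * ((p + q) / 2 * ln ((p + q) / (2 * sqrt (p * q))) - (p - q)^2 / (p + q) / 4)
      - ((p - q) * ln (p / q) / 8 - (p - q)^2 / (p + q) / 4)"
  proof -
    have h: "x+1 \<noteq> 0" "x*q+q \<noteq> 0" using x q by (auto simp: add_pos_pos) (metis add_pos_pos mult_pos_pos less_irrefl)
    have lx: "ln (p / q) = ln x" by (simp add: x_def)
    show ?thesis unfolding l1 lx FF_def
      unfolding px using h by (simp add: divide_simps) algebra
  qed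
  finally show ?thesis by simp
qed

theorem proposition5p5:
  fixes n :: nat and P Q :: "nat \<Rightarrow> real"
  assumes "n \<ge> 2" and "P \<in> Gamma n" and "Q \<in> Gamma n"
  shows "D_JDelta n P Q \<le> 2 / 3 * D_TDelta n P Q"
proof -
  have "D_JDelta n P Q = (\<Sum>i<n. (P i - Q i) * ln (P i / Q i) / 8 - (P i - Q i)^2 / (P i + Q i) / 4)"
    by (simp add: D_JDelta_def J_div_def Delta_div_def sum_subtractf sum_divide_distrib)
  also have "\<dots> \<le> (\<Sum>i<n. 2/3 * ((P i + Q i) / 2 * ln ((P i + Q i) / (2 * sqrt (P i * Q i))) - (P i - Q i)^2 / (P i + Q i) / 4))"
    apply (rule sum_mono)
    apply (rule pointwise)
    using assms(2,3) by (auto simp: Gamma_def)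
  also have "\<dots> = 2/3 * (\<Sum>i<n. ((P i + Q i) / 2 * ln ((P i + Q i) / (2 * sqrt (P i * Q i))) - (P i - Q i)^2 / (P i + Q i) / 4))"
    by (rule sum_distrib_left[symmetric])
  also have "\<dots> = 2 / 3 * D_TDelta n P Q"
    by (simp add: D_TDelta_def T_div_def Delta_div_def sum_subtractf sum_divide_distrib)
  finally show ?thesis .
qed

end
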